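(* Let $0<\epsilon<1/2$, $C=\lceil\epsilon^{-1}\rceil$ and $c\in\{0,\dots,C-1\}$. Let $G$ be a graph with edge weights $w(e)\ge1$, and let $G^c$, its levels, the level matchings $M^c_l$, the combined matching $\hat{M}^c$ and the sets $\mathcal{R}^c(e)$ be as defined below. Then for every edge $e\in\hat{M}^c$, $$\Phi^c(e)\le(1+3\epsilon)\,w(e),$$ where $\Phi^c(e)=\sum_{e'\in\mathcal{R}^c(e)}w(e')$.
   Context: An edge $e$ is in bucket $b\in\mathbb{Z}$ if $w(e)\in[\epsilon^{-b},\epsilon^{-(b+1)})$. The graph $G^c$ is obtained from $G$ by removing all edges whose bucket $b$ satisfies $b\equiv c\pmod C$. Level $l$ of copy $c$ consists of the edges of $G^c$ in buckets $lC+c+1,\dots,(l+1)C+c-1$. For each level $l$, $M^c_l$ is a matching consisting of level-$l$ edges of $G^c$. The combined matching $\hat{M}^c$ is formed greedily: start from $\emptyset$; for $l$ from the maximum level down to the minimum, add the (remaining) edges of $M^c_l$, and for each $(u,v)\in M^c_l$ remove all edges incident to $u$ or $v$ from every $M^c_{l'}$ with $l'<l$. For $e=(u,v)\in\hat{M}^c$ on level $l$, $\mathcal{R}^c(e)=\{e\}\cup\{(x,y)\in M^c_{l'}: l'<l,\ \{x,y\}\cap\{u,v\}\ne\emptyset\}$ (level matchings taken before removals). *)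

theory Defs
  imports Complex_Main
begin

text \<open>Undirected simple graph: a set E of edges, each edge a 2-element vertex set.
  An edge e lies in bucket b iff w e \<in> [eps^(-b), eps^(-(b+1))).\<close>

definition bucket :: "real \<Rightarrow> ('e \<Rightarrow> real) \<Rightarrow> 'e \<Rightarrow> int" where
  "bucket eps w e = (THE b::int. inverse eps powi b \<le> w e \<and> w e < inverse eps powi (b + 1))"

definition copy_edges :: "real \<Rightarrow> nat \<Rightarrow> nat \<Rightarrow> ('a set \<Rightarrow> real) \<Rightarrow> 'a set set \<Rightarrow> 'a set set" where
  "copy_edges eps C c w E = {e \<in> E. \<not> (bucket eps w e mod int C = int c mod int C)}"

definition level_edges :: "real \<Rightarrow> nat \<Rightarrow> nat \<Rightarrow> ('a set \<Rightarrow> real) \<Rightarrow> 'a set set \<Rightarrow> int \<Rightarrow> 'a set set" where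
  "level_edges eps C c w E l = {e \<in> copy_edges eps C c w E.
      l * int C + int c + 1 \<le> bucket eps w e \<and> bucket eps w e \<le> (l + 1) * int C + int c - 1}"

definition is_matching :: "'a set set \<Rightarrow> bool" where
  "is_matching M \<longleftrightarrow> (\<forall>e\<in>M. \<forall>f\<in>M. e \<noteq> f \<longrightarrow> e \<inter> f = {})"

fun greedy_upto :: "(int \<Rightarrow> 'a set set) \<Rightarrow> int \<Rightarrow> nat \<Rightarrow> 'a set set" where
  "greedy_upto M T 0 = {}"
| "greedy_upto M T (Suc k) =
     greedy_upto M T k \<union> {e \<in> M (T - int k). \<forall>f \<in> greedy_upto M T k. f \<inter> e = {}}"

definition levels :: "real \<Rightarrow> nat \<Rightarrow> nat \<Rightarrow> ('a set \<Rightarrow> real) \<Rightarrow> 'a set set \<Rightarrow> int set" where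
  "levels eps C c w E = {l. level_edges eps C c w E l \<noteq> {}}"

definition combined :: "real \<Rightarrow> nat \<Rightarrow> nat \<Rightarrow> ('a set \<Rightarrow> real) \<Rightarrow> 'a set set
    \<Rightarrow> (int \<Rightarrow> 'a set set) \<Rightarrow> 'a set set" where
  "combined eps C c w E M =
     greedy_upto M (Max (levels eps C c w E))
       (nat (Max (levels eps C c w E) - Min (levels eps C c w E) + 1))"

text \<open>R^c(e) for an edge e on level l (level matchings taken before removals).\<close>
definition Rset :: "(int \<Rightarrow> 'a set set) \<Rightarrow> int \<Rightarrow> 'a set \<Rightarrow> 'a set set" where
  "Rset M l e = {e} \<union> {f. \<exists>l'<l. f \<in> M l' \<and> f \<inter> e \<noteq> {}}"

end

theory Submission
  imports Defs
begin

lemma bucket_prop: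
  assumes e0: "0 < eps" and q: "1 < inverse eps" and x: "1 \<le> w f"
  shows "inverse eps powi bucket eps w f \<le> w f \<and> w f < inverse eps powi (bucket eps w f + 1)"
proof -
  let ?q = "inverse eps"
  define b where "b = \<lfloor>log ?q (w f)\<rfloor>"
  have pi: "?q powr real_of_int k = ?q powi k" for k using q e0 by (intro powr_real_of_int') auto
  have lg: "?q powr (log ?q (w f)) = w f" using q x e0 by (intro powr_log_cancel) auto
  have "?q powr real_of_int b \<le> ?q powr (log ?q (w f))"
    using q unfolding b_def by (intro powr_mono) auto
  hence 1: "?q powi b \<le> w f" using lg pi by metis
  have lb: "log ?q (w f) < real_of_int (b+1)" unfolding b_def using real_of_int_floor_add_one_gt[of "log ?q (w f)"] by simp
  have "?q powr (log ?q (w f)) < ?q powr real_of_int (b+1)"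
    using powr_less_mono[OF lb q] .
  hence 2: "w f < ?q powi (b+1)" using lg pi by metis
  have uniq: "a = b" if "?q powi a \<le> w f" "w f < ?q powi (a+1)" for a
  proof (rule ccontr)
    assume "a \<noteq> b"
    hence "a + 1 \<le> b \<or> b + 1 \<le> a" by presburger
    thus False
    proof
      assume "a + 1 \<le> b" hence "?q powi (a+1) \<le> ?q powi b" using q by (intro power_int_increasing) auto
      thus False using 1 that by simp
    next
      assume "b + 1 \<le> a" hence "?q powi (b+1) \<le> ?q powi a" using q by (intro power_int_increasing) auto
      thus False using 2 that by simp
    qed
  qed
  have "bucket eps w f = b" unfolding bucket_def
    using 1 2 uniq by (intro the_equality) blast+
  thus ?thesis using 1 2 by simp
qed

lemma lev_facts:
  assumes "f \<in> level_edges eps C c w E l'"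
  shows "f \<in> E \<and> l' * int C + int c + 1 \<le> bucket eps w f \<and> bucket eps w f \<le> (l' + 1) * int C + int c - 1"
  using assms unfolding level_edges_def copy_edges_def by auto

theorem lemma9:
  fixes eps :: real and C c :: nat and E :: "'a set set" and w :: "'a set \<Rightarrow> real"
    and M :: "int \<Rightarrow> 'a set set" and e :: "'a set" and l :: int
  assumes eps: "0 < eps" "eps < 1/2"
    and C_def: "C = nat \<lceil>1 / eps\<rceil>"
    and c: "c < C"
    and finE: "finite E"
    and edges: "\<forall>f\<in>E. card f = 2"
    and wpos: "\<forall>f\<in>E. w f \<ge> 1"
    and Mlev: "\<forall>l'. M l' \<subseteq> level_edges eps C c w E l'"
    and Mmatch: "\<forall>l'. is_matching (M l')"
    and e_hat: "e \<in> combined eps C c w E M"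
    and e_lev: "e \<in> M l"
  shows "(\<Sum>f\<in>Rset M l e. w f) \<le> (1 + 3 * eps) * w e"
proof -
  let ?q = "inverse eps"
  have q1: "1 < ?q" using eps by (simp add: one_less_inverse)
  have C3: "int C \<ge> 3"
  proof -
    have "1 / eps > 2" using eps by (simp add: field_simps)
    hence "\<lceil>1 / eps\<rceil> \<ge> 3" by linarith
    thus ?thesis using C_def by simp
  qed
  have MLv: "f \<in> M j \<Longrightarrow> f \<in> E \<and> j * int C + int c + 1 \<le> bucket eps w f \<and> bucket eps w f \<le> (j + 1) * int C + int c - 1" for f j
    using Mlev lev_facts[of f eps C c w E j] by blast
  have bp: "f \<in> E \<Longrightarrow> ?q powi bucket eps w f \<le> w f \<and> w f < ?q powi (bucket eps w f + 1)" for f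
    using bucket_prop[OF eps(1) q1, of w f] wpos by auto
  have b0: "f \<in> E \<Longrightarrow> 0 \<le> bucket eps w f" for f
  proof (rule ccontr)
    assume fE: "f \<in> E" and "\<not> 0 \<le> bucket eps w f"
    hence "bucket eps w f + 1 \<le> 0" by simp
    hence "?q powi (bucket eps w f + 1) \<le> ?q powi 0" using q1 by (intro power_int_increasing) auto
    moreover have "w f \<ge> 1" using wpos fE by blast
    ultimately show False using bp[OF fE] by (simp only: power_int_0_right) linarith
  qed
  have eE: "e \<in> E" using MLv[OF e_lev] by blast
  obtain u v where uv: "e = {u, v}" using edges eE by (meson card_2_iff)
  have we: "w e \<ge> 1" using wpos eE by blast
  have wbound: "w f \<le> eps ^ (nat (l - 1 - l') * C + 1) * w e" if fM: "f \<in> M l'" and ll: "l' < l" for f l'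
  proof -
    define K where "K = nat (l - 1 - l') * C + 1"
    define Bf where "Bf = (l' + 1) * int C + int c"
    have fE: "f \<in> E" using MLv[OF fM] by blast
    have n: "int (nat (l - 1 - l')) = l - 1 - l'" using ll by simp
    have KK: "int K = (l - 1 - l') * int C + 1" unfolding K_def of_nat_add of_nat_mult of_nat_1 n by (rule refl)
    have "Bf + int K = l * int C + int c + 1" unfolding Bf_def KK by (simp add: algebra_simps)
    hence "Bf + int K \<le> bucket eps w e" using MLv[OF e_lev] by simp
    hence "?q powi (Bf + int K) \<le> ?q powi bucket eps w e" using q1 by (intro power_int_increasing) auto
    also have "\<dots> \<le> w e" using bp[OF eE] by simp
    finally have A0: "?q powi (Bf + int K) \<le> w e" .
    have "?q powi (Bf + int K) = ?q powi Bf * ?q powi (int K)" using q1 by (intro power_int_add) auto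
    hence A: "?q powi Bf * ?q ^ K \<le> w e" using A0 by (simp add: power_int_of_nat)
    have "bucket eps w f + 1 \<le> Bf" using MLv[OF fM] unfolding Bf_def by simp
    hence "?q powi (bucket eps w f + 1) \<le> ?q powi Bf" using q1 by (intro power_int_increasing) auto
    hence B: "w f \<le> ?q powi Bf" using bp[OF fE] by simp
    have "?q powi Bf = (?q powi Bf * ?q ^ K) * eps ^ K" using eps by (simp add: power_inverse field_simps)
    also have "\<dots> \<le> w e * eps ^ K" using A eps by (intro mult_right_mono) auto
    finally have "w f \<le> w e * eps ^ K" using B by linarith
    thus ?thesis unfolding K_def by (simp only: mult.commute)
  qed
  define Rest where "Rest = {f. \<exists>l'<l. f \<in> M l' \<and> f \<inter> e \<noteq> {}}"
  have RsetEq: "Rset M l e = insert e Rest" unfolding Rset_def Rest_def by auto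
  have RestE: "Rest \<subseteq> E" unfolding Rest_def using MLv by blast
  have finRest: "finite Rest" using RestE finE finite_subset by blast
  have wnn: "f \<in> E \<Longrightarrow> 0 \<le> w f" for f using wpos by force
  have S1: "(\<Sum>f\<in>Rset M l e. w f) \<le> w e + (\<Sum>f\<in>Rest. w f)"
    unfolding RsetEq using finRest we by (simp add: sum.insert_if)
  define lev where "lev f = (SOME l'. l' < l \<and> f \<in> M l' \<and> f \<inter> e \<noteq> {})" for f
  have levP: "lev f < l \<and> f \<in> M (lev f) \<and> f \<inter> e \<noteq> {}" if "f \<in> Rest" for f
    using that unfolding Rest_def lev_def by (smt (verit, ccfv_threshold) mem_Collect_eq someI_ex)
  have levlow: "lev f \<ge> -1" if "f \<in> Rest" for f
  proof (rule ccontr)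
    assume "\<not> lev f \<ge> -1"
    hence "lev f + 1 \<le> -1" by simp
    hence "(lev f + 1) * int C \<le> (-1) * int C" by (intro mult_right_mono) auto
    moreover have "bucket eps w f \<le> (lev f + 1) * int C + int c - 1" using MLv levP that by blast
    moreover have "0 \<le> bucket eps w f" using b0 RestE that by blast
    ultimately show False using c by linarith
  qed
  define kf where "kf f = nat (l - 1 - lev f)" for f
  define N where "N = nat l + 1"
  define r where "r = eps ^ C"
  have kfN: "kf ` Rest \<subseteq> {..<N}" unfolding kf_def N_def using levlow levP by fastforce
  have S2: "(\<Sum>f\<in>Rest. w f) = (\<Sum>k<N. \<Sum>f\<in>{f \<in> Rest. kf f = k}. w f)"
    using sum.group[OF finRest _ kfN, of w] by simp
  have fib: "(\<Sum>f\<in>{f \<in> Rest. kf f = k}. w f) \<le> 2 * (eps * r ^ k * w e)" for k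
  proof -
    define A where "A = {f \<in> M (l - 1 - int k). f \<inter> e \<noteq> {}}"
    have sub: "{f \<in> Rest. kf f = k} \<subseteq> A"
    proof
      fix f assume "f \<in> {f \<in> Rest. kf f = k}"
      hence fR: "f \<in> Rest" and "kf f = k" by auto
      hence "lev f = l - 1 - int k" unfolding kf_def using levP[OF fR] by auto
      thus "f \<in> A" unfolding A_def using levP[OF fR] by auto
    qed
    have finA: "finite A" unfolding A_def using MLv finE by (metis (no_types, lifting) finite_subset mem_Collect_eq subsetI)
    have mt: "is_matching (M (l - 1 - int k))" using Mmatch by blast
    have Au: "card {f \<in> A. u \<in> f} \<le> 1"
    proof -
      have fin: "finite {f \<in> A. u \<in> f}" using finA by simp
      have "\<forall>a\<in>{f \<in> A. u \<in> f}. \<forall>b\<in>{f \<in> A. u \<in> f}. a = b"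
        using mt unfolding is_matching_def A_def by blast
      hence "card {f \<in> A. u \<in> f} \<le> Suc 0" using card_le_Suc0_iff_eq[OF fin] by blast
      thus ?thesis by simp
    qed
    have Av: "card {f \<in> A. v \<in> f} \<le> 1"
    proof -
      have fin: "finite {f \<in> A. v \<in> f}" using finA by simp
      have "\<forall>a\<in>{f \<in> A. v \<in> f}. \<forall>b\<in>{f \<in> A. v \<in> f}. a = b"
        using mt unfolding is_matching_def A_def by blast
      hence "card {f \<in> A. v \<in> f} \<le> Suc 0" using card_le_Suc0_iff_eq[OF fin] by blast
      thus ?thesis by simp
    qed
    have "A = {f \<in> A. u \<in> f} \<union> {f \<in> A. v \<in> f}" unfolding A_def uv by auto
    hence "card A \<le> card {f \<in> A. u \<in> f} + card {f \<in> A. v \<in> f}" by (metis card_Un_le)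
    hence cA: "card A \<le> 2" using Au Av by linarith
    have cF: "card {f \<in> Rest. kf f = k} \<le> 2" using card_mono[OF finA sub] cA by linarith
    have bnd: "w f \<le> eps * r ^ k * w e" if "f \<in> {f \<in> Rest. kf f = k}" for f
    proof -
      have fR: "f \<in> Rest" and kk: "kf f = k" using that by auto
      have "w f \<le> eps ^ (nat (l - 1 - lev f) * C + 1) * w e" using wbound levP[OF fR] by blast
      also have "eps ^ (nat (l - 1 - lev f) * C + 1) = eps * r ^ k"
        using kk unfolding kf_def r_def by (simp add: power_mult mult.commute)
      finally show ?thesis .
    qed
    have "(\<Sum>f\<in>{f \<in> Rest. kf f = k}. w f) \<le> of_nat (card {f \<in> Rest. kf f = k}) * (eps * r ^ k * w e)"
      by (rule sum_bounded_above) (rule bnd)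
    also have "\<dots> \<le> 2 * (eps * r ^ k * w e)"
      using cF eps we unfolding r_def by (intro mult_right_mono) auto
    finally show ?thesis .
  qed
  have r14: "r \<le> 1/4"
  proof -
    have "eps ^ C \<le> eps ^ 2" using eps C3 by (intro power_decreasing) auto
    also have "eps ^ 2 \<le> (1/2) ^ 2" using eps by (intro power_mono) auto
    finally show ?thesis unfolding r_def by (simp add: power2_eq_square)
  qed
  have r0: "0 \<le> r" unfolding r_def using eps by simp
  have geo: "(\<Sum>k<N. r ^ k) \<le> 4/3"
  proof -
    have "(\<Sum>k<N. r ^ k) = (1 - r ^ N) / (1 - r)" using r14 by (simp add: sum_gp_strict)
    also have "\<dots> \<le> 1 / (1 - r)" using r14 r0 by (intro divide_right_mono) auto
    also have "\<dots> \<le> 4/3" using r14 by (simp add: field_simps)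
    finally show ?thesis .
  qed
  have "(\<Sum>f\<in>Rest. w f) \<le> (\<Sum>k<N. 2 * (eps * r ^ k * w e))" unfolding S2 by (intro sum_mono fib)
  also have "\<dots> = 2 * eps * w e * (\<Sum>k<N. r ^ k)" by (simp add: sum_distrib_left mult_ac)
  also have "\<dots> \<le> 2 * eps * w e * (4/3)" using geo eps we by (intro mult_left_mono) auto
  finally have "(\<Sum>f\<in>Rest. w f) \<le> 2 * eps * w e * (4/3)" .
  moreover have "2 * eps * w e * (4/3) \<le> 3 * eps * w e" using eps we by simp
  ultimately show ?thesis using S1 by (simp add: algebra_simps)
qed
end
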